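(* With the matrices defined in the context, $U\,V_\beta=K_\beta\,U$; i.e. the diagram $C_0\xrightarrow{U}H_0$, $V_\beta:C_0\to C_0$, $K_\beta:H_0\to H_0$, $C_0\xrightarrow{U}H_0$ commutes.
   Context: Setting. $I\subset\mathbb{R}$ compact interval; $f_i(x)=\rho_ix+\varrho_i$ ($i=1,\dots,n$), $0<|\rho_i|<1$, IFS with open set condition; $I$ is the union of a nonempty open interval $I_h$ (hole) and $f_1(I),\dots,f_n(I)$, with pairwise disjoint interiors and $I_h$ disjoint from the $f_i(I)$; $F(x)=f_i^{-1}(x)$ on $f_i(I)$. The laps $I_1,\dots,I_n$ (left to right) and the hole have endpoints $a_1<\dots<a_{n+2}$, hole $(a_h,a_{h+1})$; interior endpoints are turning/discontinuity points. Assume the forward orbit of every one-sided endpoint $a_i^\pm$ is finite. Points $y^{(1)},\dots,y^{(q)}$: the one-sided endpoints $a_1^+,a_2^-,a_2^+,\dots,a_{n+2}^-$ (with $a_i^-,a_i^+$ consecutive) together with all other points of their forward orbits, ordered along $I$; $C_0=\mathbb{R}^q$ with $y^{(i)}$ the $i$-th standard basis vector; $H_0=\mathbb{R}^n$ with basis indexed by the laps. $V_\beta=[v_{ij}]$ ($q\times q$, $\beta\in\mathbb{R}$): if $F(y^{(j)})=y^{(i)}$, $v_{ij}=\varepsilon(y^{(j)})|F'(y^{(j)})|^{-\beta}$ with $\varepsilon$ the sign of $F'$ at $y^{(j)}$ (column zero for limits from inside the hole); for every pair of consecutive entries that are the two one-sided versions of a turning/discontinuity point between $y^{(j)}$ and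 $y^{(i)}$: if $y^{(i)}>y^{(j)}$, pair $y^{(k)},y^{(k+1)}$, $j\le k<i$, set $v_{kj}=v_{ij}$, $v_{k+1,j}=-v_{ij}$; if $y^{(i)}<y^{(j)}$, pair $y^{(k-1)},y^{(k)}$, $i<k\le j$, set $v_{k-1,j}=-v_{ij}$, $v_{kj}=v_{ij}$; all other entries $0$. $U$ is the $n\times q$ matrix with entry $(j,i)$ equal to $1$ if $y^{(i)}\in I_j$, else $0$. $K_\beta$ is the $n\times n$ diagonal matrix with $k_{ii}=\varepsilon(I_i)|F'|_{I_i}|^{-\beta}$, $\varepsilon(I_i)$ the sign of $F'$ on $I_i$. *)

theory Defs
  imports "Jordan_Normal_Form.Matrix" "HOL-Library.Product_Lexorder"
begin

text \<open>
  The partition points are a 1 < a 2 < ... < a (n+2); the hole is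
  the open interval (a h, a (h+1)).
  A one-sided point is a pair (x, s) :: real \<times> bool, where s = True means x^+
  (limit from the right) and s = False means x^- (limit from the left).
  The lexicographic order on real \<times> bool (False < True) is the order along I
  in which x^- precedes x^+.
\<close>

definition lap_left :: "nat \<Rightarrow> nat \<Rightarrow> nat" where
  "lap_left h l = (if l < h then l else l + 1)"

definition lap_set :: "(nat \<Rightarrow> real) \<Rightarrow> nat \<Rightarrow> nat \<Rightarrow> real set" where
  "lap_set a h l = {a (lap_left h l) .. a (lap_left h l + 1)}"

definition in_lap :: "(nat \<Rightarrow> real) \<Rightarrow> nat \<Rightarrow> nat \<Rightarrow> real \<times> bool \<Rightarrow> bool" where
  "in_lap a h l p =
     (let lo = a (lap_left h l); hi = a (lap_left h l + 1) in
      if snd p then lo \<le> fst p \<and> fst p < hi else lo < fst p \<and> fst p \<le> hi)"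

text \<open>F = f_l^{-1} applied to a one-sided point of lap l (side flips when F decreases)\<close>
definition F_os :: "(nat \<Rightarrow> real) \<Rightarrow> (nat \<Rightarrow> real) \<Rightarrow> nat \<Rightarrow> real \<times> bool \<Rightarrow> real \<times> bool" where
  "F_os \<rho> \<sigma> l p = ((fst p - \<sigma> l) / \<rho> l, if \<rho> l > 0 then snd p else \<not> snd p)"

text \<open>forward orbit of a one-sided point (stops when the point lies in no lap, i.e. in the hole)\<close>
inductive_set fwd_orbit ::
  "(nat \<Rightarrow> real) \<Rightarrow> nat \<Rightarrow> nat \<Rightarrow> (nat \<Rightarrow> real) \<Rightarrow> (nat \<Rightarrow> real) \<Rightarrow> real \<times> bool \<Rightarrow> (real \<times> bool) set"
  for a h n \<rho> \<sigma> p where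
  start: "p \<in> fwd_orbit a h n \<rho> \<sigma> p"
| step: "x \<in> fwd_orbit a h n \<rho> \<sigma> p \<Longrightarrow> l \<in> {1..n} \<Longrightarrow> in_lap a h l x
          \<Longrightarrow> F_os \<rho> \<sigma> l x \<in> fwd_orbit a h n \<rho> \<sigma> p"

definition endpoints_os :: "(nat \<Rightarrow> real) \<Rightarrow> nat \<Rightarrow> (real \<times> bool) set" where
  "endpoints_os a n = {(a 1, True), (a (n + 2), False)} \<union> {(a m, s) | m s. 2 \<le> m \<and> m \<le> n + 1}"

text \<open>the list y^{(1)}, ..., y^{(q)} (0-indexed), ordered along I\<close>
definition ypts :: "(nat \<Rightarrow> real) \<Rightarrow> nat \<Rightarrow> nat \<Rightarrow> (nat \<Rightarrow> real) \<Rightarrow> (nat \<Rightarrow> real) \<Rightarrow> (real \<times> bool) list" where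
  "ypts a h n \<rho> \<sigma> = sorted_list_of_set (\<Union>e \<in> endpoints_os a n. fwd_orbit a h n \<rho> \<sigma> e)"

definition turning_pair :: "(nat \<Rightarrow> real) \<Rightarrow> nat \<Rightarrow> (real \<times> bool) list \<Rightarrow> nat \<Rightarrow> bool" where
  "turning_pair a n ys k = (Suc k < length ys \<and>
     (\<exists>m. 2 \<le> m \<and> m \<le> n + 1 \<and> ys ! k = (a m, False) \<and> ys ! Suc k = (a m, True)))"

text \<open>\<epsilon>(I_l) |F'|_{I_l}|^{-\<beta>}, with F' = 1/\<rho>_l on lap l\<close>
definition wt :: "(nat \<Rightarrow> real) \<Rightarrow> real \<Rightarrow> nat \<Rightarrow> real" where
  "wt \<rho> \<beta> l = sgn (1 / \<rho> l) * \<bar>1 / \<rho> l\<bar> powr (- \<beta>)"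

definition ind :: "bool \<Rightarrow> real" where
  "ind b = (if b then 1 else 0)"

text \<open>V_\<beta> (entries of the different rules are added up)\<close>
definition V_mat :: "(nat \<Rightarrow> real) \<Rightarrow> nat \<Rightarrow> nat \<Rightarrow> (nat \<Rightarrow> real) \<Rightarrow> (nat \<Rightarrow> real) \<Rightarrow> real \<Rightarrow> real mat" where
  "V_mat a h n \<rho> \<sigma> \<beta> =
    (let ys = ypts a h n \<rho> \<sigma>; q = length ys in
     mat q q (\<lambda>(i, j).
       \<Sum>l\<in>{1..n}. if in_lap a h l (ys ! j) then
         (let w = wt \<rho> \<beta> l;
              i0 = (THE i0. i0 < q \<and> ys ! i0 = F_os \<rho> \<sigma> l (ys ! j)) in
          w * (ind (i = i0)
               + (\<Sum>k\<in>{k. turning_pair a n ys k \<and> j \<le> k \<and> k < i0}. ind (i = k) - ind (i = Suc k))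
               + (\<Sum>k\<in>{k. turning_pair a n ys k \<and> i0 \<le> k \<and> k < j}. ind (i = Suc k) - ind (i = k))))
       else 0))"

definition U_mat :: "(nat \<Rightarrow> real) \<Rightarrow> nat \<Rightarrow> nat \<Rightarrow> (nat \<Rightarrow> real) \<Rightarrow> (nat \<Rightarrow> real) \<Rightarrow> real mat" where
  "U_mat a h n \<rho> \<sigma> =
    (let ys = ypts a h n \<rho> \<sigma> in
     mat n (length ys) (\<lambda>(l, i). ind (in_lap a h (Suc l) (ys ! i))))"

definition K_mat :: "nat \<Rightarrow> (nat \<Rightarrow> real) \<Rightarrow> real \<Rightarrow> real mat" where
  "K_mat n \<rho> \<beta> = mat n n (\<lambda>(l, l'). if l = l' then wt \<rho> \<beta> (Suc l) else 0)"

end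

theory Submission
  imports Defs
begin

lemma a_less:
  fixes n :: nat and a :: "nat \<Rightarrow> real"
  assumes a_mono: "\<And>i. 1 \<le> i \<Longrightarrow> i < n + 2 \<Longrightarrow> a i < a (i + 1)"
  shows "1 \<le> i \<Longrightarrow> i < j \<Longrightarrow> j \<le> n + 2 \<Longrightarrow> (a i :: real) < a j"
proof -
  assume h: "1 \<le> i" "i < j" "j \<le> n + 2"
  obtain d where d: "j = Suc i + d" using h(2) less_iff_Suc_add by auto
  have "Suc i + d \<le> n + 2 \<Longrightarrow> a i < a (Suc i + d)" for d
  proof (induction d)
    case 0 then show ?case using a_mono[of i] h(1) by simp
  next
    case (Suc d)
    then have "a i < a (Suc i + d)" by simp
    also have "\<dots> < a (Suc i + d + 1)" using a_mono[of "Suc i + d"] Suc.prems by simp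
    finally show ?case by simp
  qed
  then show ?thesis using d h by simp
qed

lemma a_le:
  fixes n :: nat and a :: "nat \<Rightarrow> real"
  assumes a_mono: "\<And>i. 1 \<le> i \<Longrightarrow> i < n + 2 \<Longrightarrow> a i < a (i + 1)"
  shows "1 \<le> i \<Longrightarrow> i \<le> j \<Longrightarrow> j \<le> n + 2 \<Longrightarrow> (a i :: real) \<le> a j"
  using a_less[of n a, OF a_mono] by (metis order.order_iff_strict)

lemma in_lap_iff:
  "in_lap a h l y \<longleftrightarrow> (a (lap_left h l), True) \<le> y \<and> y \<le> (a (lap_left h l + 1), False)"
  by (cases y) (auto simp: in_lap_def Let_def)

lemma sum_ind: "(k::nat) < q \<Longrightarrow> (\<Sum>i<q. (g i::real) * ind (i = k)) = g k"
proof -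
  assume "k < q"
  have "(\<Sum>i<q. (g i::real) * ind (i = k)) = (\<Sum>i<q. if i = k then g k else 0)"
    by (rule sum.cong) (auto simp: ind_def)
  also have "\<dots> = g k" using \<open>k < q\<close> by (subst sum.delta) auto
  finally show ?thesis .
qed

lemma core:
  fixes g :: "nat \<Rightarrow> real" and T :: "nat \<Rightarrow> bool"
  assumes "i0 < q" "j < q" "\<And>k. T k \<Longrightarrow> Suc k < q"
    "\<And>k. Suc k < q \<Longrightarrow> \<not> T k \<Longrightarrow> g k = g (Suc k)"
  shows "(\<Sum>i<q. g i * (ind (i = i0) + (\<Sum>k\<in>{k. T k \<and> j \<le> k \<and> k < i0}. ind (i = k) - ind (i = Suc k))
      + (\<Sum>k\<in>{k. T k \<and> i0 \<le> k \<and> k < j}. ind (i = Suc k) - ind (i = k)))) = g j"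
proof -
  let ?A = "{k. T k \<and> j \<le> k \<and> k < i0}" and ?B = "{k. T k \<and> i0 \<le> k \<and> k < j}"
  have qk: "\<And>k. T k \<Longrightarrow> k < q" "\<And>k. T k \<Longrightarrow> Suc k < q" using assms(3) Suc_lessD by blast+
  have fA: "finite ?A" by (rule finite_subset[of _ "{..<i0}"]) auto
  have fB: "finite ?B" by (rule finite_subset[of _ "{..<j}"]) auto
  have e1: "(\<Sum>i<q. g i * (\<Sum>k\<in>?A. ind (i = k) - ind (i = Suc k))) = (\<Sum>k\<in>?A. g k - g (Suc k))"
  proof -
    have "(\<Sum>i<q. g i * (\<Sum>k\<in>?A. ind (i = k) - ind (i = Suc k)))
        = (\<Sum>k\<in>?A. \<Sum>i<q. g i * ind (i = k) - g i * ind (i = Suc k))"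
      by (simp add: sum_distrib_left right_diff_distrib sum.swap[of _ ?A])
    also have "\<dots> = (\<Sum>k\<in>?A. g k - g (Suc k))"
      by (rule sum.cong) (use assms(3) in \<open>auto simp: sum_subtractf sum_ind qk\<close>)
    finally show ?thesis .
  qed
  have e2: "(\<Sum>i<q. g i * (\<Sum>k\<in>?B. ind (i = Suc k) - ind (i = k))) = (\<Sum>k\<in>?B. g (Suc k) - g k)"
  proof -
    have "(\<Sum>i<q. g i * (\<Sum>k\<in>?B. ind (i = Suc k) - ind (i = k)))
        = (\<Sum>k\<in>?B. \<Sum>i<q. g i * ind (i = Suc k) - g i * ind (i = k))"
      by (simp add: sum_distrib_left right_diff_distrib sum.swap[of _ ?B])
    also have "\<dots> = (\<Sum>k\<in>?B. g (Suc k) - g k)"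
      by (rule sum.cong) (use assms(3) in \<open>auto simp: sum_subtractf sum_ind qk\<close>)
    finally show ?thesis .
  qed
  have tele: "u \<le> v \<Longrightarrow> v < q \<Longrightarrow> (\<Sum>k\<in>{k. T k \<and> u \<le> k \<and> k < v}. g k - g (Suc k)) = g u - g v" for u v
  proof (induction v rule: dec_induct)
    case base
    have "{k. T k \<and> u \<le> k \<and> k < u} = {}" by auto
    show ?case unfolding \<open>{k. T k \<and> u \<le> k \<and> k < u} = {}\<close> by simp
  next
    case (step v)
    have "{k. T k \<and> u \<le> k \<and> k < Suc v} = {k. T k \<and> u \<le> k \<and> k < v} \<union> (if T v then {v} else {})"
      using step.hyps by (auto simp: less_Suc_eq)
    moreover have "finite {k. T k \<and> u \<le> k \<and> k < v}" by (rule finite_subset[of _ "{..<v}"]) auto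
    ultimately show ?case using step assms(4)[of v] by (auto simp: sum.union_disjoint)
  qed
  have "(\<Sum>i<q. g i * (ind (i = i0) + (\<Sum>k\<in>?A. ind (i = k) - ind (i = Suc k))
      + (\<Sum>k\<in>?B. ind (i = Suc k) - ind (i = k))))
     = (\<Sum>i<q. g i * ind (i = i0)) + (\<Sum>i<q. g i * (\<Sum>k\<in>?A. ind (i = k) - ind (i = Suc k)))
       + (\<Sum>i<q. g i * (\<Sum>k\<in>?B. ind (i = Suc k) - ind (i = k)))"
    by (simp add: distrib_left sum.distrib)
  also have "\<dots> = g i0 + (\<Sum>k\<in>?A. g k - g (Suc k)) + (\<Sum>k\<in>?B. g (Suc k) - g k)"
    using e1 e2 sum_ind[OF assms(1)] by simp
  also have "\<dots> = g j"
  proof (cases "j \<le> i0")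
    case True
    then have "?B = {}" by auto
    show ?thesis unfolding \<open>?B = {}\<close> using tele[OF True assms(1)] by simp
  next
    case False
    then have "?A = {}" by auto
    moreover have "(\<Sum>k\<in>?B. g (Suc k) - g k) = - (\<Sum>k\<in>?B. g k - g (Suc k))"
      by (simp add: sum_negf[symmetric])
    ultimately show ?thesis unfolding \<open>?A = {}\<close> using tele[of i0 j] False assms(2) by simp
  qed
  finally show ?thesis .
qed

context
  fixes n h :: nat and a \<rho> \<sigma> :: "nat \<Rightarrow> real" and \<beta> :: real
  assumes a_mono: "\<And>i. 1 \<le> i \<Longrightarrow> i < n + 2 \<Longrightarrow> a i < a (i + 1)"
    and hole: "1 \<le> h" "h \<le> n + 1"
    and contr: "\<And>l. l \<in> {1..n} \<Longrightarrow> 0 < \<bar>\<rho> l\<bar> \<and> \<bar>\<rho> l\<bar> < 1"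
    and image: "\<And>l. l \<in> {1..n} \<Longrightarrow>
                  (\<lambda>x. \<rho> l * x + \<sigma> l) ` {a 1 .. a (n + 2)} = lap_set a h l"
    and fin: "\<And>e. e \<in> endpoints_os a n \<Longrightarrow> finite (fwd_orbit a h n \<rho> \<sigma> e)"
begin

lemma lt: "1 \<le> i \<Longrightarrow> i < j \<Longrightarrow> j \<le> n + 2 \<Longrightarrow> a i < a j"
  using a_less[of n a, OF a_mono] by blast

lemma le: "1 \<le> i \<Longrightarrow> i \<le> j \<Longrightarrow> j \<le> n + 2 \<Longrightarrow> a i \<le> a j"
  using a_le[of n a, OF a_mono] by blast

lemma lap_bounds: "l \<in> {1..n} \<Longrightarrow> 1 \<le> lap_left h l \<and> lap_left h l + 1 \<le> n + 2"
  using hole by (auto simp: lap_left_def)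

lemma lap_order: "l1 \<in> {1..n} \<Longrightarrow> l2 \<in> {1..n} \<Longrightarrow> l1 < l2 \<Longrightarrow> lap_left h l1 + 1 \<le> lap_left h l2"
  by (auto simp: lap_left_def)

lemma ends:
  assumes l: "l \<in> {1..n}"
  shows "\<rho> l > 0 \<Longrightarrow> \<rho> l * a 1 + \<sigma> l = a (lap_left h l) \<and> \<rho> l * a (n+2) + \<sigma> l = a (lap_left h l + 1)"
    and "\<rho> l < 0 \<Longrightarrow> \<rho> l * a (n+2) + \<sigma> l = a (lap_left h l) \<and> \<rho> l * a 1 + \<sigma> l = a (lap_left h l + 1)"
proof -
  define f where "f = (\<lambda>x. \<rho> l * x + \<sigma> l)"
  define lo where "lo = a (lap_left h l)"
  define hi where "hi = a (lap_left h l + 1)"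
  have a12: "a 1 \<le> a (n+2)" using le[of 1 "n+2"] by simp
  have im: "f ` {a 1 .. a (n + 2)} = {lo..hi}" using image[OF l] by (simp add: f_def lo_def hi_def lap_set_def)
  have f1: "lo \<le> f (a 1) \<and> f (a 1) \<le> hi" using im a12 by auto
  have f2: "lo \<le> f (a (n+2)) \<and> f (a (n+2)) \<le> hi" using im a12 by auto
  have "lo \<le> hi" using f1 by simp
  then obtain t1 where t1: "t1 \<in> {a 1 .. a (n+2)}" "lo = f t1" using im by (metis atLeastAtMost_iff imageE order_refl)
  obtain t2 where t2: "t2 \<in> {a 1 .. a (n+2)}" "hi = f t2" using im \<open>lo \<le> hi\<close>
    by (metis atLeastAtMost_iff imageE order_refl)
  show "\<rho> l > 0 \<Longrightarrow> \<rho> l * a 1 + \<sigma> l = a (lap_left h l) \<and> \<rho> l * a (n+2) + \<sigma> l = a (lap_left h l + 1)"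
  proof -
    assume p: "\<rho> l > 0"
    have "f (a 1) \<le> f t1" "f t2 \<le> f (a (n+2))" using t1 t2 p by (auto simp: f_def intro!: mult_left_mono)
    then have "f (a 1) = lo" "f (a (n+2)) = hi" using f1 f2 t1 t2 by linarith+
    then show ?thesis by (simp add: f_def lo_def hi_def)
  qed
  show "\<rho> l < 0 \<Longrightarrow> \<rho> l * a (n+2) + \<sigma> l = a (lap_left h l) \<and> \<rho> l * a 1 + \<sigma> l = a (lap_left h l + 1)"
  proof -
    assume p: "\<rho> l < 0"
    have "f (a (n+2)) \<le> f t1" "f t2 \<le> f (a 1)" using t1 t2 p by (auto simp: f_def intro!: mult_left_mono_neg)
    then have "f (a (n+2)) = lo" "f (a 1) = hi" using f1 f2 t1 t2 by linarith+
    then show ?thesis by (simp add: f_def lo_def hi_def)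
  qed
qed

definition rng :: "real \<times> bool \<Rightarrow> bool" where
  "rng y = ((a 1, True) \<le> y \<and> y \<le> (a (n+2), False))"

lemma rng_iff: "rng (x, s) \<longleftrightarrow> (if s then a 1 \<le> x \<and> x < a (n+2) else a 1 < x \<and> x \<le> a (n+2))"
  by (cases s) (auto simp: rng_def)

lemma F_rng:
  assumes l: "l \<in> {1..n}" and y: "in_lap a h l y"
  shows "rng (F_os \<rho> \<sigma> l y)"
proof -
  obtain x s where xs: "y = (x, s)" by (cases y)
  have "\<rho> l \<noteq> 0" using contr[OF l] by auto
  then consider "\<rho> l > 0" | "\<rho> l < 0" by linarith
  then show ?thesis
  proof cases
    case 1
    note e = ends(1)[OF l 1]
    have "(if s then a 1 \<le> (x - \<sigma> l) / \<rho> l \<and> (x - \<sigma> l) / \<rho> l < a (n+2)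
           else a 1 < (x - \<sigma> l) / \<rho> l \<and> (x - \<sigma> l) / \<rho> l \<le> a (n+2))"
      using y e 1 unfolding xs in_lap_def Let_def
      by (cases s) (auto simp: pos_le_divide_eq pos_divide_le_eq pos_less_divide_eq pos_divide_less_eq algebra_simps)
    then show ?thesis using 1 unfolding xs F_os_def by (simp add: rng_iff)
  next
    case 2
    note e = ends(2)[OF l 2]
    have "(if \<not> s then a 1 \<le> (x - \<sigma> l) / \<rho> l \<and> (x - \<sigma> l) / \<rho> l < a (n+2)
           else a 1 < (x - \<sigma> l) / \<rho> l \<and> (x - \<sigma> l) / \<rho> l \<le> a (n+2))"
      using y e 2 unfolding xs in_lap_def Let_def
      by (cases s) (auto simp: neg_le_divide_eq neg_divide_le_eq neg_less_divide_eq neg_divide_less_eq algebra_simps)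
    then show ?thesis using 2 unfolding xs F_os_def by (simp add: rng_iff)
  qed
qed

lemma orbit_rng: "x \<in> fwd_orbit a h n \<rho> \<sigma> e \<Longrightarrow> rng e \<Longrightarrow> rng x"
  by (induction rule: fwd_orbit.induct) (auto intro: F_rng)

lemma end_rng: "e \<in> endpoints_os a n \<Longrightarrow> rng e"
proof -
  assume "e \<in> endpoints_os a n"
  moreover have "a 1 < a (n+2)" using lt[of 1 "n+2"] by simp
  moreover have "2 \<le> m \<Longrightarrow> m \<le> n + 1 \<Longrightarrow> a 1 < a m \<and> a m < a (n+2)" for m
    using lt[of 1 m] lt[of m "n+2"] by simp
  ultimately show ?thesis unfolding endpoints_os_def rng_def by auto
qed

abbreviation ys where "ys \<equiv> ypts a h n \<rho> \<sigma>"
abbreviation Y where "Y \<equiv> (\<Union>e \<in> endpoints_os a n. fwd_orbit a h n \<rho> \<sigma> e)"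

lemma fin_end: "finite (endpoints_os a n)"
proof -
  have "endpoints_os a n \<subseteq> {(a 1, True), (a (n + 2), False)} \<union> (\<lambda>(m, s). (a m, s)) ` ({2..n+1} \<times> UNIV)"
    unfolding endpoints_os_def by auto
  moreover have "finite ({(a 1, True), (a (n + 2), False)} \<union> (\<lambda>(m, s). (a m, s)) ` ({2..n+1} \<times> (UNIV :: bool set)))"
    by simp
  ultimately show ?thesis by (rule finite_subset)
qed

lemma finY: "finite Y" using fin_end fin by blast

lemma set_ys: "set ys = Y"
  unfolding ypts_def using finY by simp

lemma sorted_ys: "sorted_wrt (<) ys"
  unfolding ypts_def by (rule strict_sorted_list_of_set)

lemma distinct_ys: "distinct ys"
  unfolding ypts_def by simp

lemma ys_rng: "y \<in> set ys \<Longrightarrow> rng y"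
  unfolding set_ys using orbit_rng end_rng by blast

lemma ys_closed: "y \<in> set ys \<Longrightarrow> l \<in> {1..n} \<Longrightarrow> in_lap a h l y \<Longrightarrow> F_os \<rho> \<sigma> l y \<in> set ys"
proof -
  assume y: "y \<in> set ys" and l: "l \<in> {1..n}" and il: "in_lap a h l y"
  from y obtain e where e: "e \<in> endpoints_os a n" "y \<in> fwd_orbit a h n \<rho> \<sigma> e"
    unfolding set_ys by blast
  have "F_os \<rho> \<sigma> l y \<in> fwd_orbit a h n \<rho> \<sigma> e" by (rule fwd_orbit.step[OF e(2) l il])
  then show ?thesis unfolding set_ys using e(1) by (rule UN_I[rotated])
qed

lemma ys_turn: "2 \<le> m \<Longrightarrow> m \<le> n + 1 \<Longrightarrow> (a m, s) \<in> set ys"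
proof -
  assume "2 \<le> m" "m \<le> n + 1"
  then have "(a m, s) \<in> endpoints_os a n" unfolding endpoints_os_def by blast
  then show ?thesis unfolding set_ys using fwd_orbit.start[of "(a m, s)"] by (rule UN_I)
qed

lemma lap_unique:
  assumes "l1 \<in> {1..n}" "l2 \<in> {1..n}" "in_lap a h l1 y" "in_lap a h l2 y"
  shows "l1 = l2"
proof (rule ccontr)
  have key: "False" if "l1 \<in> {1..n}" "l2 \<in> {1..n}" "in_lap a h l1 y" "in_lap a h l2 y" "l1 < l2" for l1 l2
  proof -
    have o: "lap_left h l1 + 1 \<le> lap_left h l2" using lap_order that by blast
    have b1: "1 \<le> lap_left h l1" "lap_left h l2 + 1 \<le> n + 2" using lap_bounds that by blast+
    have "a (lap_left h l1 + 1) \<le> a (lap_left h l2)" using le o b1 by simp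
    then show False using that(3,4) unfolding in_lap_iff by (cases y) auto
  qed
  assume "l1 \<noteq> l2"
  then show False using key assms by (metis linorder_neqE_nat)
qed

lemma consec:
  assumes "Suc k < length ys" "z \<in> set ys" "ys ! k \<le> z" "z \<le> ys ! Suc k"
  shows "z = ys ! k \<or> z = ys ! Suc k"
proof -
  obtain p where p: "p < length ys" "z = ys ! p" using assms(2) by (metis in_set_conv_nth)
  have "\<not> p < k" using sorted_wrt_nth_less[OF sorted_ys, of p k] assms p by auto
  moreover have "\<not> Suc k < p" using sorted_wrt_nth_less[OF sorted_ys, of "Suc k" p] assms p by auto
  ultimately have "p = k \<or> p = Suc k" by linarith
  then show ?thesis using p by auto
qed

lemma tp_intro:
  assumes "2 \<le> m" "m \<le> n + 1" "Suc k < length ys" "ys ! k \<le> (a m, False)" "(a m, True) \<le> ys ! Suc k"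
  shows "turning_pair a n ys k"
proof -
  have ne: "ys ! Suc k \<noteq> (a m, False)"
  proof
    assume "ys ! Suc k = (a m, False)"
    then show False using assms(5) by simp
  qed
  have "(a m, False) \<le> (a m, True)" by simp
  then have le2: "(a m, False) \<le> ys ! Suc k" using assms(5) by (rule order.trans)
  have f: "(a m, False) = ys ! k"
    using consec[OF assms(3) ys_turn[OF assms(1,2)] assms(4) le2] ne by auto
  have le1: "ys ! k \<le> (a m, True)" using assms(4) \<open>(a m, False) \<le> (a m, True)\<close> by (rule order.trans)
  have ne1: "ys ! k \<noteq> (a m, True)" using f by auto
  have t: "(a m, True) = ys ! Suc k"
    using consec[OF assms(3) ys_turn[OF assms(1,2)] le1 assms(5)] ne1 by auto
  show ?thesis unfolding turning_pair_def using assms f t by metis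
qed

lemma lt_True: "(y :: real \<times> bool) < (x, True) \<Longrightarrow> y \<le> (x, False)"
  by (cases y) auto

lemma gt_False: "(x, False) < (y :: real \<times> bool) \<Longrightarrow> (x, True) \<le> y"
  by (cases y) auto

lemma nojump:
  assumes L: "L \<in> {1..n}" and k: "Suc k < length ys" and ntp: "\<not> turning_pair a n ys k"
  shows "in_lap a h L (ys ! k) = in_lap a h L (ys ! Suc k)"
proof (rule ccontr)
  define ll where "ll = lap_left h L"
  define y1 where "y1 = ys ! k"
  define y2 where "y2 = ys ! Suc k"
  have b: "1 \<le> ll" "ll + 1 \<le> n + 2" using lap_bounds[OF L] by (auto simp: ll_def)
  have y12: "y1 < y2" using sorted_wrt_nth_less[OF sorted_ys, of k "Suc k"] k by (simp add: y1_def y2_def)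
  have r1: "rng y1" "rng y2" using ys_rng k by (auto simp: y1_def y2_def)
  assume ne: "in_lap a h L (ys ! k) \<noteq> in_lap a h L (ys ! Suc k)"
  have c: "((a ll, True) \<le> y1 \<and> y1 \<le> (a (ll+1), False)) \<noteq> ((a ll, True) \<le> y2 \<and> y2 \<le> (a (ll+1), False))"
    using ne by (simp add: in_lap_iff ll_def y1_def y2_def)
  consider "y1 < (a ll, True)" "(a ll, True) \<le> y2" | "y1 \<le> (a (ll+1), False)" "(a (ll+1), False) < y2"
  proof (cases "(a ll, True) \<le> y1")
    case True
    then have "(a ll, True) \<le> y2" using y12 by (meson order.strict_implies_order order.trans)
    then have "y1 \<le> (a (ll+1), False)" "\<not> y2 \<le> (a (ll+1), False)" using c True y12
      by (meson order.strict_implies_order order.trans)+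
    then show ?thesis using that(2) by (simp add: not_le)
  next
    case False
    then have "(a ll, True) \<le> y2" "y2 \<le> (a (ll+1), False)" using c y12
      by (meson order.strict_implies_order order.trans)+
    then show ?thesis using that(1) False by (simp add: not_le)
  qed
  then show False
  proof cases
    case 1
    have "ll \<noteq> 1" using 1 r1 unfolding rng_def by auto
    then have "turning_pair a n ys k" using tp_intro[of ll k] b k lt_True[OF 1(1)] 1(2)
      by (simp add: y1_def y2_def)
    then show False using ntp by simp
  next
    case 2
    have "ll + 1 \<noteq> n + 2" using 2 r1 unfolding rng_def by auto
    then have "turning_pair a n ys k" using tp_intro[of "ll+1" k] b k gt_False[OF 2(2)] 2(1)
      by (simp add: y1_def y2_def)
    then show False using ntp by simp
  qed
qed

lemma i0_spec:
  assumes "j < length ys" "l \<in> {1..n}" "in_lap a h l (ys ! j)"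
  shows "(THE i0. i0 < length ys \<and> ys ! i0 = F_os \<rho> \<sigma> l (ys ! j)) < length ys"
proof -
  have "F_os \<rho> \<sigma> l (ys ! j) \<in> set ys" using ys_closed assms by auto
  then obtain p where p: "p < length ys" "ys ! p = F_os \<rho> \<sigma> l (ys ! j)" by (metis in_set_conv_nth)
  have "\<exists>!i0. i0 < length ys \<and> ys ! i0 = F_os \<rho> \<sigma> l (ys ! j)"
    using p distinct_ys nth_eq_iff_index_eq by metis
  then show ?thesis by (rule theI'[THEN conjunct1])
qed

lemma V_entry:
  assumes "i < length ys" "j < length ys"
  shows "V_mat a h n \<rho> \<sigma> \<beta> $$ (i, j) =
    (\<Sum>l\<in>{1..n}. if in_lap a h l (ys ! j) then
         wt \<rho> \<beta> l * (ind (i = (THE i0. i0 < length ys \<and> ys ! i0 = F_os \<rho> \<sigma> l (ys ! j)))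
               + (\<Sum>k\<in>{k. turning_pair a n ys k \<and> j \<le> k \<and> k < (THE i0. i0 < length ys \<and> ys ! i0 = F_os \<rho> \<sigma> l (ys ! j))}. ind (i = k) - ind (i = Suc k))
               + (\<Sum>k\<in>{k. turning_pair a n ys k \<and> (THE i0. i0 < length ys \<and> ys ! i0 = F_os \<rho> \<sigma> l (ys ! j)) \<le> k \<and> k < j}. ind (i = Suc k) - ind (i = k)))
       else 0)"
  using assms unfolding V_mat_def Let_def by simp

lemma mult_entry:
  fixes A B :: "real mat"
  shows "l < dim_row A \<Longrightarrow> j < dim_col B \<Longrightarrow> dim_col A = dim_row B \<Longrightarrow>
    (A * B) $$ (l, j) = (\<Sum>i<dim_row B. A $$ (l, i) * B $$ (i, j))"
  by (simp add: scalar_prod_def atLeast0LessThan)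

lemma swap_lemma:
  fixes g :: "nat \<Rightarrow> real"
  shows "(\<Sum>i<q. g i * (\<Sum>l'\<in>S. if P l' then w l' * C l' i else 0))
       = (\<Sum>l'\<in>S. if P l' then w l' * (\<Sum>i<q. g i * C l' i) else 0)"
proof -
  have "(\<Sum>i<q. g i * (\<Sum>l'\<in>S. if P l' then w l' * C l' i else 0))
      = (\<Sum>l'\<in>S. \<Sum>i<q. g i * (if P l' then w l' * C l' i else 0))"
    by (simp add: sum_distrib_left sum.swap[of _ S])
  also have "\<dots> = (\<Sum>l'\<in>S. if P l' then w l' * (\<Sum>i<q. g i * C l' i) else 0)"
    by (rule sum.cong) (auto simp: sum_distrib_left mult.left_commute)
  finally show ?thesis .
qed

lemma main: "U_mat a h n \<rho> \<sigma> * V_mat a h n \<rho> \<sigma> \<beta> = K_mat n \<rho> \<beta> * U_mat a h n \<rho> \<sigma>"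
proof (rule eq_matI)
  show "dim_row (U_mat a h n \<rho> \<sigma> * V_mat a h n \<rho> \<sigma> \<beta>) = dim_row (K_mat n \<rho> \<beta> * U_mat a h n \<rho> \<sigma>)"
    by (simp add: U_mat_def V_mat_def K_mat_def Let_def)
  show "dim_col (U_mat a h n \<rho> \<sigma> * V_mat a h n \<rho> \<sigma> \<beta>) = dim_col (K_mat n \<rho> \<beta> * U_mat a h n \<rho> \<sigma>)"
    by (simp add: U_mat_def V_mat_def K_mat_def Let_def)
  fix l j
  assume "l < dim_row (K_mat n \<rho> \<beta> * U_mat a h n \<rho> \<sigma>)" "j < dim_col (K_mat n \<rho> \<beta> * U_mat a h n \<rho> \<sigma>)"
  then have l: "l < n" and j: "j < length ys" by (simp_all add: U_mat_def K_mat_def Let_def)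
  define q where "q = length ys"
  define g where "g i = ind (in_lap a h (Suc l) (ys ! i))" for i
  define P where "P l' = in_lap a h l' (ys ! j)" for l'
  define I0 where "I0 l' = (THE i0. i0 < length ys \<and> ys ! i0 = F_os \<rho> \<sigma> l' (ys ! j))" for l'
  define C where "C l' i = (ind (i = I0 l')
               + (\<Sum>k\<in>{k. turning_pair a n ys k \<and> j \<le> k \<and> k < I0 l'}. ind (i = k) - ind (i = Suc k))
               + (\<Sum>k\<in>{k. turning_pair a n ys k \<and> I0 l' \<le> k \<and> k < j}. ind (i = Suc k) - ind (i = k)))" for l' i
  have Ul: "l' < n \<Longrightarrow> i < q \<Longrightarrow> U_mat a h n \<rho> \<sigma> $$ (l', i) = ind (in_lap a h (Suc l') (ys ! i))" for l' i
    by (simp add: U_mat_def q_def Let_def)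
  have L: "Suc l \<in> {1..n}" using l by simp
  have "(U_mat a h n \<rho> \<sigma> * V_mat a h n \<rho> \<sigma> \<beta>) $$ (l, j)
      = (\<Sum>i<q. g i * V_mat a h n \<rho> \<sigma> \<beta> $$ (i, j))"
  proof -
    have dU: "dim_row (U_mat a h n \<rho> \<sigma>) = n" "dim_col (U_mat a h n \<rho> \<sigma>) = q"
      by (simp_all add: U_mat_def Let_def q_def)
    have dV: "dim_row (V_mat a h n \<rho> \<sigma> \<beta>) = q" "dim_col (V_mat a h n \<rho> \<sigma> \<beta>) = q"
      by (simp_all add: V_mat_def Let_def q_def)
    have "(U_mat a h n \<rho> \<sigma> * V_mat a h n \<rho> \<sigma> \<beta>) $$ (l, j)
      = (\<Sum>i<dim_row (V_mat a h n \<rho> \<sigma> \<beta>). U_mat a h n \<rho> \<sigma> $$ (l, i) * V_mat a h n \<rho> \<sigma> \<beta> $$ (i, j))"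
      by (rule mult_entry) (use l j dU dV q_def in auto)
    also have "\<dots> = (\<Sum>i<q. g i * V_mat a h n \<rho> \<sigma> \<beta> $$ (i, j))"
      unfolding dV by (rule sum.cong) (use l in \<open>simp_all add: Ul g_def\<close>)
    finally show ?thesis .
  qed
  also have "\<dots> = (\<Sum>i<q. g i * (\<Sum>l'\<in>{1..n}. if P l' then wt \<rho> \<beta> l' * C l' i else 0))"
    unfolding C_def I0_def P_def
    by (rule sum.cong) (use j in \<open>simp_all add: V_entry q_def\<close>)
  also have "\<dots> = (\<Sum>l'\<in>{1..n}. if P l' then wt \<rho> \<beta> l' * (\<Sum>i<q. g i * C l' i) else 0)"
    by (rule swap_lemma)
  also have "\<dots> = (\<Sum>l'\<in>{1..n}. if P l' then wt \<rho> \<beta> l' * g j else 0)"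
  proof (rule sum.cong)
    fix l' assume l': "l' \<in> {1..n}"
    show "(if P l' then wt \<rho> \<beta> l' * (\<Sum>i<q. g i * C l' i) else 0) = (if P l' then wt \<rho> \<beta> l' * g j else 0)"
    proof (cases "P l'")
      case True
      have "(\<Sum>i<q. g i * C l' i) = g j"
        unfolding C_def
      proof (rule core)
        show "I0 l' < q" using i0_spec[OF j l'] True by (simp add: I0_def q_def P_def)
        show "j < q" using j by (simp add: q_def)
        show "Suc k < q" if "turning_pair a n ys k" for k using that by (simp add: turning_pair_def q_def)
        show "g k = g (Suc k)" if "Suc k < q" "\<not> turning_pair a n ys k" for k
          using nojump[OF L, of k] that by (simp add: g_def q_def)
      qed
      then show ?thesis by simp
    qed simp
  qed simp
  also have "\<dots> = (\<Sum>l'\<in>{1..n}. if l' = Suc l then (if P (Suc l) then wt \<rho> \<beta> (Suc l) else 0) else 0)"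
  proof (rule sum.cong)
    fix l' assume l': "l' \<in> {1..n}"
    have "P l' \<Longrightarrow> P (Suc l) \<Longrightarrow> l' = Suc l" using lap_unique[OF l' L] by (simp add: P_def)
    then show "(if P l' then wt \<rho> \<beta> l' * g j else 0) = (if l' = Suc l then (if P (Suc l) then wt \<rho> \<beta> (Suc l) else 0) else 0)"
      by (auto simp: g_def P_def ind_def)
  qed simp
  also have "\<dots> = (if P (Suc l) then wt \<rho> \<beta> (Suc l) else 0)"
    using L by (subst sum.delta) auto
  also have "\<dots> = (K_mat n \<rho> \<beta> * U_mat a h n \<rho> \<sigma>) $$ (l, j)"
  proof -
    have "(K_mat n \<rho> \<beta> * U_mat a h n \<rho> \<sigma>) $$ (l, j)
        = (\<Sum>l'<n. (if l = l' then wt \<rho> \<beta> (Suc l) else 0) * ind (in_lap a h (Suc l') (ys ! j)))"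
    proof -
      have dU: "dim_row (U_mat a h n \<rho> \<sigma>) = n" "dim_col (U_mat a h n \<rho> \<sigma>) = q"
        by (simp_all add: U_mat_def Let_def q_def)
      have dK: "dim_row (K_mat n \<rho> \<beta>) = n" "dim_col (K_mat n \<rho> \<beta>) = n"
        by (simp_all add: K_mat_def)
      have "(K_mat n \<rho> \<beta> * U_mat a h n \<rho> \<sigma>) $$ (l, j)
        = (\<Sum>l'<dim_row (U_mat a h n \<rho> \<sigma>). K_mat n \<rho> \<beta> $$ (l, l') * U_mat a h n \<rho> \<sigma> $$ (l', j))"
        by (rule mult_entry) (use l j dU dK q_def in auto)
      then show ?thesis unfolding dU using l j by (simp add: K_mat_def Ul q_def)
    qed
    also have "\<dots> = (\<Sum>l'<n. if l' = l then wt \<rho> \<beta> (Suc l) * ind (P (Suc l)) else 0)"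
      by (rule sum.cong) (auto simp: P_def)
    also have "\<dots> = (if P (Suc l) then wt \<rho> \<beta> (Suc l) else 0)"
      using l by (subst sum.delta) (auto simp: ind_def)
    finally show ?thesis by simp
  qed
  finally show "(U_mat a h n \<rho> \<sigma> * V_mat a h n \<rho> \<sigma> \<beta>) $$ (l, j) = (K_mat n \<rho> \<beta> * U_mat a h n \<rho> \<sigma>) $$ (l, j)" .
qed

end

theorem lemma3:
  fixes n h :: nat and a \<rho> \<sigma> :: "nat \<Rightarrow> real" and \<beta> :: real
  assumes a_mono: "\<And>i. 1 \<le> i \<Longrightarrow> i < n + 2 \<Longrightarrow> a i < a (i + 1)"
    and hole: "1 \<le> h" "h \<le> n + 1"
    and contr: "\<And>l. l \<in> {1..n} \<Longrightarrow> 0 < \<bar>\<rho> l\<bar> \<and> \<bar>\<rho> l\<bar> < 1"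
    and image: "\<And>l. l \<in> {1..n} \<Longrightarrow>
                  (\<lambda>x. \<rho> l * x + \<sigma> l) ` {a 1 .. a (n + 2)} = lap_set a h l"
    and fin: "\<And>e. e \<in> endpoints_os a n \<Longrightarrow> finite (fwd_orbit a h n \<rho> \<sigma> e)"
  shows "U_mat a h n \<rho> \<sigma> * V_mat a h n \<rho> \<sigma> \<beta> = K_mat n \<rho> \<beta> * U_mat a h n \<rho> \<sigma>"
  using main[OF assms] .

end
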